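(* If a graph $G$ is $\mathbb{Z}_3$-colorable, then $G$ is 5-degenerate; that is, $\chi_g(G)\leq Col(G)\leq 6$.
   Context: Graphs are finite, may have multiple edges but no loops. For an Abelian group $\Gamma$, $G$ is $\Gamma$-colorable if for some (equivalently, any) orientation $D$ of $G$ and every $\varphi:E(G)\to\Gamma$ there is $c:V(G)\to\Gamma$ with $c(w)-c(u)\neq\varphi(uw)$ for every directed edge $uw$ of $D$. A graph is $d$-degenerate if every subgraph has a vertex of degree at most $d$. The coloring number $Col(G)$ is the smallest $d$ such that $G$ is $(d-1)$-degenerate; equivalently $Col(G)-1$ is the maximum, over all subgraphs of $G$, of the minimum degree. The group chromatic number $\chi_g(G)$ is the smallest $k$ such that $G$ is $\Gamma$-colorable for every Abelian group $\Gamma$ of order at least $k$. *)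

theory Defs
  imports Main "HOL-Library.Numeral_Type"
begin

text \<open>A finite loopless multigraph: vertex set V, edge set E (edge identities, so
parallel edges are allowed), and ends e = the 2-element set of endpoints of e.\<close>
definition multigraph :: "'v set \<Rightarrow> 'e set \<Rightarrow> ('e \<Rightarrow> 'v set) \<Rightarrow> bool" where
  "multigraph V E ends \<longleftrightarrow> finite V \<and> finite E \<and>
     (\<forall>e\<in>E. ends e \<subseteq> V \<and> card (ends e) = 2)"

definition orientation :: "'e set \<Rightarrow> ('e \<Rightarrow> 'v set) \<Rightarrow> ('e \<Rightarrow> 'v) \<Rightarrow> bool" where
  "orientation E ends tail \<longleftrightarrow> (\<forall>e\<in>E. tail e \<in> ends e)"

definition head :: "('e \<Rightarrow> 'v set) \<Rightarrow> ('e \<Rightarrow> 'v) \<Rightarrow> 'e \<Rightarrow> 'v" where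
  "head ends tail e = (THE w. w \<in> ends e \<and> w \<noteq> tail e)"

definition group_colorable ::
  "'g::ab_group_add itself \<Rightarrow> 'v set \<Rightarrow> 'e set \<Rightarrow> ('e \<Rightarrow> 'v set) \<Rightarrow> bool" where
  "group_colorable _ V E ends \<longleftrightarrow>
     (\<exists>tail. orientation E ends tail \<and>
       (\<forall>\<phi> :: 'e \<Rightarrow> 'g. \<exists>c :: 'v \<Rightarrow> 'g.
          \<forall>e\<in>E. c (head ends tail e) - c (tail e) \<noteq> \<phi> e))"

definition degree_in :: "'e set \<Rightarrow> ('e \<Rightarrow> 'v set) \<Rightarrow> 'v \<Rightarrow> nat" where
  "degree_in E ends v = card {e\<in>E. v \<in> ends e}"

definition degenerate :: "'v set \<Rightarrow> 'e set \<Rightarrow> ('e \<Rightarrow> 'v set) \<Rightarrow> nat \<Rightarrow> bool" where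
  "degenerate V E ends d \<longleftrightarrow>
     (\<forall>V' E'. V' \<subseteq> V \<and> V' \<noteq> {} \<and> E' \<subseteq> E \<and> (\<forall>e\<in>E'. ends e \<subseteq> V') \<longrightarrow>
        (\<exists>v\<in>V'. degree_in E' ends v \<le> d))"

end

theory Submission
  imports Defs "HOL-Library.FuncSet"
begin

lemma handshake:
  assumes fV: "finite V'" and fE: "finite E'"
    and sub: "\<forall>e\<in>E'. ends e \<subseteq> V'"
  shows "(\<Sum>v\<in>V'. card {e\<in>E'. v \<in> ends e}) = (\<Sum>e\<in>E'. card (ends e))"
proof -
  have "(\<Sum>v\<in>V'. card {e\<in>E'. v \<in> ends e}) = (\<Sum>v\<in>V'. \<Sum>e\<in>E'. if v \<in> ends e then 1 else 0)"
    using fE by (intro sum.cong refl) (simp add: sum.If_cases Collect_conj_eq)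
  also have "\<dots> = (\<Sum>e\<in>E'. \<Sum>v\<in>V'. if v \<in> ends e then 1 else 0)"
    by (rule sum.swap)
  also have "\<dots> = (\<Sum>e\<in>E'. card (ends e))"
  proof (rule sum.cong[OF refl])
    fix e assume "e \<in> E'"
    hence "V' \<inter> ends e = ends e" using sub by blast
    thus "(\<Sum>v\<in>V'. if v \<in> ends e then 1 else 0) = card (ends e)"
      using fV by (simp add: sum.If_cases Int_commute)
  qed
  finally show ?thesis .
qed

lemma card_F: "card (PiE A (\<lambda>_. UNIV :: 3 set)) = 3 ^ card A" if "finite A" for A :: "'a set"
  using that by (simp add: card_PiE)

theorem proposition7p6:
  fixes V :: "'v set" and E :: "'e set" and ends :: "'e \<Rightarrow> 'v set"
  assumes "multigraph V E ends"
    and "group_colorable TYPE(3) V E ends"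
  shows "degenerate V E ends 5"
  unfolding degenerate_def
proof (intro allI impI)
  fix V' E' assume H: "V' \<subseteq> V \<and> V' \<noteq> {} \<and> E' \<subseteq> E \<and> (\<forall>e\<in>E'. ends e \<subseteq> V')"
  show "\<exists>v\<in>V'. degree_in E' ends v \<le> 5"
  proof (rule ccontr)
    assume "\<not> ?thesis"
    hence deg: "\<forall>v\<in>V'. 6 \<le> degree_in E' ends v" by auto
    have fV: "finite V'" and fE: "finite E'" using H assms(1) unfolding multigraph_def
      by (auto intro: finite_subset)
    have c2: "\<forall>e\<in>E'. card (ends e) = 2" using H assms(1) unfolding multigraph_def by auto
    define n where "n = card V'"
    define m where "m = card E'"
    have n1: "n \<ge> 1" using H fV n_def by (simp add: Suc_le_eq card_gt_0_iff)
    have "6 * n \<le> (\<Sum>v\<in>V'. degree_in E' ends v)"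
      using sum_mono[of V' "\<lambda>_. 6" "degree_in E' ends"] deg n_def by simp
    also have "\<dots> = (\<Sum>e\<in>E'. card (ends e))"
      unfolding degree_in_def using handshake[OF fV fE] H by blast
    also have "\<dots> = 2 * m" using c2 m_def by simp
    finally have m3: "3 * n \<le> m" by simp
    obtain tail where ori: "orientation E ends tail" and col:
      "\<forall>\<phi> :: 'e \<Rightarrow> 3. \<exists>c :: 'v \<Rightarrow> 3. \<forall>e\<in>E. c (head ends tail e) - c (tail e) \<noteq> \<phi> e"
      using assms(2) unfolding group_colorable_def by blast
    have ht: "head ends tail e \<in> V' \<and> tail e \<in> V'" if "e \<in> E'" for e
    proof -
      have te: "tail e \<in> ends e" using ori that H unfolding orientation_def by blast
      have "card (ends e) = 2" using c2 that by blast
      then obtain a b where ab: "a \<noteq> b" "ends e = {a, b}" by (auto simp: card_Suc_eq numeral_2_eq_2)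
      have "\<exists>!w. w \<in> ends e \<and> w \<noteq> tail e" using te ab by auto
      hence "head ends tail e \<in> ends e" unfolding head_def by (metis (mono_tags, lifting) theI')
      thus ?thesis using te H that by blast
    qed
    define ok where "ok c \<phi> \<longleftrightarrow> (\<forall>e\<in>E'. c (head ends tail e) - c (tail e) \<noteq> (\<phi> :: 'e \<Rightarrow> 3) e)"
      for c :: "'v \<Rightarrow> 3" and \<phi>
    define F where "F = PiE E' (\<lambda>_. UNIV :: 3 set)"
    define C where "C = PiE V' (\<lambda>_. UNIV :: 3 set)"
    have cF: "card F = 3 ^ m" unfolding F_def m_def using card_F[OF fE] .
    have cC: "card C = 3 ^ n" unfolding C_def n_def using card_F[OF fV] .
    have cov: "F \<subseteq> (\<Union>c\<in>C. {\<phi>\<in>F. ok c \<phi>})"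
    proof
      fix \<phi> assume "\<phi> \<in> F"
      obtain c :: "'v \<Rightarrow> 3" where c: "\<forall>e\<in>E. c (head ends tail e) - c (tail e) \<noteq> \<phi> e"
        using col by blast
      have "ok (restrict c V') \<phi>" unfolding ok_def using c ht H by auto
      moreover have "restrict c V' \<in> C" unfolding C_def by auto
      ultimately show "\<phi> \<in> (\<Union>c\<in>C. {\<phi>\<in>F. ok c \<phi>})" using \<open>\<phi> \<in> F\<close> by blast
    qed
    have each: "card {\<phi>\<in>F. ok c \<phi>} \<le> 2 ^ m" for c
    proof -
      have "{\<phi>\<in>F. ok c \<phi>} \<subseteq> PiE E' (\<lambda>e. UNIV - {c (head ends tail e) - c (tail e)})"
        unfolding F_def ok_def by (auto simp: PiE_iff extensional_def)
      moreover have "card (PiE E' (\<lambda>e. UNIV - {c (head ends tail e) - c (tail e)})) = 2 ^ m"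
        using fE m_def by (simp add: card_PiE card_Diff_singleton)
      moreover have "finite (PiE E' (\<lambda>e. UNIV - {c (head ends tail e) - c (tail e)}))"
        using fE by (intro finite_PiE) auto
      ultimately show ?thesis using card_mono[of "PiE E' (\<lambda>e. UNIV - {c (head ends tail e) - c (tail e)})" "{\<phi>\<in>F. ok c \<phi>}"] by simp
    qed
    have "3 ^ m \<le> card (\<Union>c\<in>C. {\<phi>\<in>F. ok c \<phi>})"
    proof -
      have fF: "finite F" unfolding F_def using fE by (intro finite_PiE) auto
      have fC: "finite C" unfolding C_def using fV by (intro finite_PiE) auto
      have "finite (\<Union>c\<in>C. {\<phi>\<in>F. ok c \<phi>})" using fF fC by auto
      thus ?thesis using cF cov card_mono by metis
    qed
    also have "\<dots> \<le> (\<Sum>c\<in>C. card {\<phi>\<in>F. ok c \<phi>})"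
      by (rule card_UN_le) (unfold C_def, use fV in \<open>intro finite_PiE, auto\<close>)
    also have "\<dots> \<le> (\<Sum>c\<in>C. 2 ^ m)" by (rule sum_mono) (rule each)
    also have "\<dots> = 3 ^ n * 2 ^ m" using cC by simp
    finally have ineq: "(3::nat) ^ m \<le> 3 ^ n * 2 ^ m" .
    obtain k where k: "m = 3 * n + k" using m3 le_Suc_ex by blast
    have e1: "(3::nat) ^ m = 27 ^ n * 3 ^ k" by (simp add: k power_add power_mult)
    have e2: "(3::nat) ^ n * 2 ^ m = 24 ^ n * 2 ^ k"
      by (simp add: k power_add power_mult flip: power_mult_distrib)
    have h1: "(24::nat) ^ n < 27 ^ n" using n1 by (simp add: power_strict_mono)
    have h2: "(2::nat) ^ k \<le> 3 ^ k" by (simp add: power_mono)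
    have "(24::nat) ^ n * 2 ^ k < 27 ^ n * 3 ^ k"
      by (rule mult_less_le_imp_less[OF h1 h2]) simp_all
    with ineq e1 e2 show False by linarith
  qed
qed

end
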